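(* Let $a_1,\dots,a_k>0$, let $K,L>0$, and let $Q_+=\{u\in\mathbb{C}:\mathrm{Re}\,u<-L,\ \mathrm{Im}\,u>-K\}$, $Q_-=\{u\in\mathbb{C}:\mathrm{Re}\,u<-L,\ \mathrm{Im}\,u<K\}$. Let $f$ be holomorphic on $Q_\pm$ with $|f(u)|\le M|u|^{-A}$ on $Q_\pm$ for some constant $M$, and assume $A>k$. Then the series $$F_\pm(u)=(\mp1)^k\sum_{m_1,\dots,m_k>0}f\Big(u\pm2\pi i(a_1m_1+\cdots+a_km_k)\mp\pi i(a_1+\cdots+a_k)\Big)$$ converges and solves on $Q_\pm$ the difference equation $\Delta_{a_1,\dots,a_k}F_\pm=f$. Moreover, for every $B<A-k$ there is a constant $M_{A-k-B}$ such that $|F_\pm(u)|\le M_{A-k-B}|u|^{-B}$ on $Q_\pm$.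
   Context: $\Delta_af(u)=f(u+ia\pi)-f(u-ia\pi)$ and $\Delta_{a_1,\dots,a_k}=\Delta_{a_1}\circ\cdots\circ\Delta_{a_k}$. *)

theory Defs
  imports "HOL-Complex_Analysis.Complex_Analysis"
begin

definition Delta :: "real \<Rightarrow> (complex \<Rightarrow> complex) \<Rightarrow> complex \<Rightarrow> complex" where
  "Delta a f u = f (u + \<i> * of_real (a * pi)) - f (u - \<i> * of_real (a * pi))"

fun DeltaL :: "real list \<Rightarrow> (complex \<Rightarrow> complex) \<Rightarrow> complex \<Rightarrow> complex" where
  "DeltaL [] f = f"
| "DeltaL (a # as) f = Delta a (DeltaL as f)"

text \<open>Q_+ (sigma = 1) and Q_- (sigma = -1).\<close>
definition Qreg :: "real \<Rightarrow> real \<Rightarrow> real \<Rightarrow> complex set" where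
  "Qreg \<sigma> K L = {u. Re u < - L \<and> \<sigma> * Im u > - K}"

definition PosTuples :: "nat \<Rightarrow> (nat \<Rightarrow> nat) set" where
  "PosTuples k = PiE {..<k} (\<lambda>_. {0<..})"

definition Fsol :: "real \<Rightarrow> real list \<Rightarrow> (complex \<Rightarrow> complex) \<Rightarrow> complex \<Rightarrow> complex" where
  "Fsol \<sigma> as f u = of_real ((- \<sigma>) ^ length as) *
     infsum (\<lambda>m. f (u + of_real \<sigma> * 2 * of_real pi * \<i> * of_real (\<Sum>j<length as. as ! j * real (m j))
                     - of_real \<sigma> * of_real pi * \<i> * of_real (\<Sum>j<length as. as ! j)))
            (PosTuples (length as))"

end

theory Submission
  imports Defs
begin


lemma Q_shift:
  assumes "\<sigma> \<in> {1,-1}" "u \<in> Qreg \<sigma> K L" "t \<ge> 0"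
  shows "u + \<i> * of_real (\<sigma> * t) \<in> Qreg \<sigma> K L"
  using assms by (auto simp: Qreg_def)

lemma Q_norm: "u \<in> Qreg \<sigma> K L \<Longrightarrow> L < norm u"
  unfolding Qreg_def using abs_Re_le_cmod[of u] by auto

lemma norm_shift:
  assumes s: "\<sigma> \<in> {1,-1}" and K: "K > 0" and L: "L > 0" and u: "u \<in> Qreg \<sigma> K L" and t: "t \<ge> 0"
  shows "norm u + t \<le> (2 + 2*K/L) * norm (u + \<i> * of_real (\<sigma> * t))"
proof -
  define w where "w = u + \<i> * of_real (\<sigma> * t)"
  have Rw: "Re w = Re u" and Iw: "Im w = Im u + \<sigma> * t" by (auto simp: w_def)
  have h1: "\<bar>Re w\<bar> \<le> norm w" "\<bar>Im w\<bar> \<le> norm w" by (auto simp: abs_Re_le_cmod abs_Im_le_cmod)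
  have h2: "norm u \<le> \<bar>Re u\<bar> + \<bar>Im u\<bar>" by (rule cmod_le)
  have h3: "\<bar>Im u\<bar> + t \<le> \<bar>Im w\<bar> + 2*K"
    using s u t K unfolding Iw Qreg_def by (auto simp: abs_if)
  have ReL: "\<bar>Re u\<bar> > L" using u unfolding Qreg_def by auto
  have h4: "2*K \<le> (2*K/L) * \<bar>Re u\<bar>"
  proof -
    have "(2*K/L) * \<bar>Re u\<bar> \<ge> (2*K/L) * L" using ReL K L by (intro mult_left_mono) auto
    thus ?thesis using L by simp
  qed
  have "norm u + t \<le> \<bar>Re u\<bar> + \<bar>Im w\<bar> + 2*K" using h2 h3 by linarith
  also have "\<dots> \<le> (1 + 2*K/L) * \<bar>Re u\<bar> + \<bar>Im w\<bar>" using h4 by (simp add: distrib_right)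
  also have "\<dots> \<le> (1 + 2*K/L) * norm w + norm w"
    using h1 Rw K L by (intro add_mono mult_left_mono) auto
  also have "\<dots> = (2 + 2*K/L) * norm w" by (simp add: algebra_simps)
  finally show ?thesis unfolding w_def .
qed

definition NN :: "nat \<Rightarrow> (nat \<Rightarrow> nat) set" where
  "NN k = PiE {..<k} (\<lambda>_. UNIV)"

lemma powr_shift_bound:
  fixes L x B r :: real
  assumes "0 < L" "L \<le> x" "B \<le> r"
  shows "x powr (-r) \<le> L powr (B - r) * x powr (-B)"
proof -
  have e: "-r = (B - r) + (-B)" by simp
  have "x powr (-r) = x powr (B - r) * x powr (-B)"
    by (subst e) (simp only: powr_add)
  also have "\<dots> \<le> L powr (B - r) * x powr (-B)"
    using assms by (intro mult_right_mono powr_mono2') auto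
  finally show ?thesis .
qed

lemma summable_h:
  assumes "L > 0" "\<alpha> > 0" "q > 1"
  shows "(\<lambda>n::nat. norm ((L + \<alpha> * real n) powr (-q))) summable_on UNIV"
proof -
  have sg: "summable (\<lambda>n::nat. \<alpha> powr (-q) * real n powr (-q))"
    using assms by (intro summable_mult) (simp add: summable_real_powr_iff)
  moreover have bnd: "\<forall>n\<ge>1. norm ((L + \<alpha> * real n) powr (-q)) \<le> \<alpha> powr (-q) * real n powr (-q)"
  proof (intro allI impI)
    fix n :: nat assume "n \<ge> 1"
    have "(L + \<alpha> * real n) powr (-q) \<le> (\<alpha> * real n) powr (-q)"
      using assms \<open>n\<ge>1\<close> by (intro powr_mono2') auto
    thus "norm ((L + \<alpha> * real n) powr (-q)) \<le> \<alpha> powr (-q) * real n powr (-q)"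
      using assms by (simp add: powr_mult)
  qed
  have ev: "eventually (\<lambda>n. norm (norm ((L + \<alpha> * real n) powr (-q))) \<le> \<alpha> powr (-q) * real n powr (-q)) sequentially"
    by (rule eventually_sequentiallyI[of 1]) (use bnd in simp)
  have "summable (\<lambda>n::nat. norm ((L + \<alpha> * real n) powr (-q)))"
    using summable_comparison_test_ev[where f="\<lambda>n. norm ((L + \<alpha> * real n) powr (-q))" and g="\<lambda>n. \<alpha> powr (-q) * real n powr (-q)"] ev sg
    by blast
  hence "summable (\<lambda>n::nat. norm (norm ((L + \<alpha> * real n) powr (-q))))" by simp
  thus ?thesis by (rule norm_summable_imp_summable_on)
qed

lemma prod_summable:
  assumes "(\<lambda>n::nat. norm (h n :: real)) summable_on UNIV"
  shows "(\<lambda>n. norm (\<Prod>j<k. h (n j))) summable_on NN k"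
proof -
  have "Infinite_Set_Sum.abs_summable_on h UNIV"
    using assms by (rule abs_summable_equivalent[THEN iffD1])
  hence "Infinite_Set_Sum.abs_summable_on (\<lambda>n. \<Prod>j<k. h (n j)) (PiE {..<k} (\<lambda>_. UNIV))"
    by (intro abs_summable_on_prod_PiE) auto
  thus ?thesis unfolding NN_def by (rule abs_summable_equivalent[THEN iffD2])
qed

lemma prod_infsum:
  assumes "(\<lambda>n::nat. norm (h n :: real)) summable_on UNIV"
  shows "(\<Sum>\<^sub>\<infinity>n\<in>NN k. \<Prod>j<k. h (n j)) = (infsum h UNIV) ^ k"
proof -
  have "(\<Sum>\<^sub>\<infinity>n\<in>NN k. \<Prod>j<k. h (n j)) = (\<Prod>j<k. infsum h UNIV)"
    unfolding NN_def using assms by (intro infsum_prod_PiE_abs) auto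
  thus ?thesis by simp
qed



lemma SUMB:
  fixes bs :: "real list" and f :: "complex \<Rightarrow> complex" and \<sigma> K L M A B :: real
  assumes s: "\<sigma> \<in> {1,-1}" and pos: "\<forall>b\<in>set bs. b > 0" and K: "K > 0" and L: "L > 0" and M: "M \<ge> 0"
    and fb: "\<forall>u\<in>Qreg \<sigma> K L. norm (f u) \<le> M * norm u powr (-A)"
    and A: "A > real (length bs)" and B: "B < A - real (length bs)"
  shows "\<exists>C. \<forall>u\<in>Qreg \<sigma> K L.
     (\<lambda>n. norm (f (u + \<i> * of_real (\<sigma> * (pi * (\<Sum>j<length bs. bs!j * real (n j))))))) summable_on NN (length bs)
   \<and> (\<Sum>\<^sub>\<infinity>n\<in>NN (length bs). norm (f (u + \<i> * of_real (\<sigma> * (pi * (\<Sum>j<length bs. bs!j * real (n j)))))))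
       \<le> C * norm u powr (-B)"
proof -
  define k where "k = length bs"
  define B0 where "B0 = max B ((A - k)/2)"
  have B0: "B0 > 0" "B \<le> B0" "B0 < A - k" using A B unfolding B0_def k_def by (auto simp: less_max_iff_disj)
  define q where "q = 1 + (A - k - B0)/(k+1)"
  have q: "q > 1" using B0 unfolding q_def by auto
  define r where "r = A - k*q"
  have kq: "k * q \<le> k + (A - k - B0)"
  proof -
    have "k * ((A - k - B0)/(k+1)) \<le> (A - k - B0)"
    proof -
      have "k * ((A - k - B0)/(k+1)) = (A - k - B0) * (k/(k+1))" by simp
      also have "\<dots> \<le> (A - k - B0) * 1" using B0 by (intro mult_left_mono) auto
      finally show ?thesis by simp
    qed
    thus ?thesis unfolding q_def by (simp add: distrib_left)
  qed
  have r: "r \<ge> B0" using kq unfolding r_def by linarith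
  define c where "c = Min (insert 1 (set bs))"
  have c: "c > 0" using pos unfolding c_def by (subst Min_gr_iff) auto
  have cb: "c \<le> bs!j" if "j < k" for j
    unfolding c_def using that k_def by (intro Min_le) auto
  define \<alpha> where "\<alpha> = pi * c"
  have \<alpha>: "\<alpha> > 0" using c unfolding \<alpha>_def by simp
  define D where "D = 2 + 2*K/L"
  have D: "D > 0" using K L unfolding D_def by (simp add: add_pos_nonneg)
  define h where "h n = (L + \<alpha> * real n) powr (-q)" for n :: nat
  have hs: "(\<lambda>n. norm (h n)) summable_on UNIV" unfolding h_def using summable_h[OF L \<alpha> q] .
  have hpos: "h n \<ge> 0" for n unfolding h_def by simp
  define S where "S = infsum h UNIV"
  have Spos: "S \<ge> 0" unfolding S_def using hpos by (intro infsum_nonneg) auto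
  define C where "C = M * D powr A * S ^ k * L powr (B - r)"
  show ?thesis
  proof (intro exI ballI)
    fix u assume u: "u \<in> Qreg \<sigma> K L"
    have nu: "norm u > L" using Q_norm[OF u] .
    define T where "T n = pi * (\<Sum>j<k. bs!j * real (n j))" for n :: "nat \<Rightarrow> nat"
    define F where "F n = f (u + \<i> * of_real (\<sigma> * T n))" for n
    define G where "G n = M * D powr A * norm u powr (-r) * (\<Prod>j<k. h (n j))" for n
    have bound: "norm (F n) \<le> G n" for n
    proof -
      have T0: "T n \<ge> 0" unfolding T_def using pos k_def
        by (intro mult_nonneg_nonneg sum_nonneg) (auto simp: less_imp_le)
      have Tj: "T n \<ge> \<alpha> * real (n j)" if "j < k" for j
      proof -
        have "c * real (n j) \<le> bs!j * real (n j)" using cb[OF that] by (intro mult_right_mono) auto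
        also have "\<dots> \<le> (\<Sum>j<k. bs!j * real (n j))"
          using that pos k_def by (intro member_le_sum) (auto simp: less_imp_le)
        finally show ?thesis unfolding T_def \<alpha>_def by simp
      qed
      define w where "w = u + \<i> * of_real (\<sigma> * T n)"
      have w: "w \<in> Qreg \<sigma> K L" unfolding w_def using Q_shift[OF s u T0] .
      define X where "X = norm u + T n"
      have X: "X \<le> D * norm w" unfolding X_def w_def D_def using norm_shift[OF s K L u T0] .
      have Xpos: "X > 0" using nu L T0 unfolding X_def by linarith
      have "norm (F n) \<le> M * norm w powr (-A)" using fb w unfolding F_def w_def by auto
      also have "norm w powr (-A) \<le> (X / D) powr (-A)"
        using X Xpos D A by (intro powr_mono2') (auto simp: field_simps)
      also have "(X / D) powr (-A) = D powr A * X powr (-A)"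
        by (simp add: powr_divide powr_minus divide_simps)
      also have "X powr (-A) = X powr (-r) * (X powr (-q)) ^ k"
      proof -
        have e: "-A = -r + (-q) * real k" unfolding r_def by simp
        have "X powr (-A) = X powr (-r) * X powr ((-q) * real k)"
          by (subst e) (simp only: powr_add)
        also have "X powr ((-q) * real k) = (X powr (-q)) ^ k"
        proof -
          have "X powr ((-q) * real k) = (X powr (-q)) powr real k" by (simp only: powr_powr)
          also have "\<dots> = (X powr (-q)) ^ k" using Xpos by (simp add: powr_realpow)
          finally show ?thesis .
        qed
        finally show ?thesis .
      qed
      also have "(X powr (-q)) ^ k = (\<Prod>j<k. X powr (-q))" by simp
      also have "X powr (-r) * (\<Prod>j<k. X powr (-q)) \<le> norm u powr (-r) * (\<Prod>j<k. h (n j))"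
      proof (intro mult_mono prod_mono conjI)
        show "X powr (-r) \<le> norm u powr (-r)"
          using B0 r nu L T0 unfolding X_def by (intro powr_mono2') auto
        fix j assume j: "j \<in> {..<k}"
        show "X powr (-q) \<le> h (n j)" unfolding h_def
          using Tj[of j] j nu q \<alpha> L unfolding X_def by (intro powr_mono2') (auto intro: add_pos_nonneg)
      qed (auto simp: hpos prod_nonneg)
      finally show ?thesis unfolding G_def using M D
        by (simp add: mult_left_mono mult.assoc)
    qed
    have Ps: "(\<lambda>n. (\<Prod>j<k. h (n j))) summable_on NN k"
    proof -
      have "(\<lambda>n. norm (\<Prod>j<k. h (n j))) summable_on NN k" using prod_summable[OF hs] .
      thus ?thesis using hpos by (simp add: prod_nonneg)
    qed
    have Gs: "G summable_on NN k"
      unfolding G_def using Ps by (rule summable_on_cmult_right)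
    have Fs: "(\<lambda>n. norm (F n)) summable_on NN k"
    proof (rule Infinite_Sum.abs_summable_on_comparison_test)
      have "norm (G n) = G n" for n unfolding G_def using hpos M D
        by (simp add: abs_mult prod_nonneg)
      thus "(\<lambda>n. norm (G n)) summable_on NN k" using Gs by simp
    next
      fix n assume "n \<in> NN k" thus "norm (F n) \<le> norm (G n)" using bound[of n]
        by simp
    qed
    have "(\<Sum>\<^sub>\<infinity>n\<in>NN k. norm (F n)) \<le> infsum G (NN k)"
      using Fs Gs bound by (intro infsum_mono) auto
    also have "infsum G (NN k) = M * D powr A * norm u powr (-r) * S ^ k"
      unfolding G_def S_def
      by (subst infsum_cmult_right) (auto simp: Ps prod_infsum[OF hs])
    also have "\<dots> = M * D powr A * S ^ k * norm u powr (-r)" by simp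
    also have "\<dots> \<le> M * D powr A * S ^ k * (L powr (B - r) * norm u powr (-B))"
      using M Spos nu L B0 r by (intro mult_left_mono powr_shift_bound) auto
    finally have "(\<Sum>\<^sub>\<infinity>n\<in>NN k. norm (F n)) \<le> C * norm u powr (-B)"
      unfolding C_def by (simp add: mult.assoc)
    with Fs show "(\<lambda>n. norm (f (u + \<i> * of_real (\<sigma> * (pi * (\<Sum>j<length bs. bs!j * real (n j))))))) summable_on NN (length bs)
   \<and> (\<Sum>\<^sub>\<infinity>n\<in>NN (length bs). norm (f (u + \<i> * of_real (\<sigma> * (pi * (\<Sum>j<length bs. bs!j * real (n j)))))))
       \<le> C * norm u powr (-B)"
      unfolding F_def T_def k_def by simp
  qed
qed



lemma reidx:
  assumes inj: "inj_on \<phi> I" and sub: "\<phi> ` I \<subseteq> J" and sm: "(\<lambda>n. norm (F n)) summable_on J"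
  shows "(\<lambda>m. norm (F (\<phi> m))) summable_on I"
    and "(\<Sum>\<^sub>\<infinity>m\<in>I. norm (F (\<phi> m))) \<le> (\<Sum>\<^sub>\<infinity>n\<in>J. norm (F n))"
proof -
  have s1: "(\<lambda>n. norm (F n)) summable_on \<phi> ` I" using sm sub by (rule summable_on_subset)
  thus "(\<lambda>m. norm (F (\<phi> m))) summable_on I"
    using summable_on_reindex[OF inj, of "\<lambda>n. norm (F n)"] by (simp add: o_def)
  have "(\<Sum>\<^sub>\<infinity>m\<in>I. norm (F (\<phi> m))) = (\<Sum>\<^sub>\<infinity>n\<in>\<phi> ` I. norm (F n))"
    using infsum_reindex[OF inj, of "\<lambda>n. norm (F n)"] by (simp add: o_def)
  also have "\<dots> \<le> (\<Sum>\<^sub>\<infinity>n\<in>J. norm (F n))"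
    using s1 sm sub by (intro infsum_mono_neutral) auto
  finally show "(\<Sum>\<^sub>\<infinity>m\<in>I. norm (F (\<phi> m))) \<le> (\<Sum>\<^sub>\<infinity>n\<in>J. norm (F n))" .
qed

definition Pt :: "real \<Rightarrow> real list \<Rightarrow> complex \<Rightarrow> (nat \<Rightarrow> nat) \<Rightarrow> complex" where
  "Pt \<sigma> bs u n = u + \<i> * of_real (\<sigma> * (pi * (\<Sum>j<length bs. bs!j * real (n j))))"

definition phi :: "nat \<Rightarrow> (nat \<Rightarrow> int) \<Rightarrow> (nat \<Rightarrow> nat) \<Rightarrow> (nat \<Rightarrow> nat)" where
  "phi k d g = restrict (\<lambda>j. nat (2 * int (g j) - 1 + d j)) {..<k}"

definition tm :: "real \<Rightarrow> real list \<Rightarrow> complex \<Rightarrow> (nat \<Rightarrow> nat) \<Rightarrow> complex" where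
  "tm \<sigma> as v m = v + of_real \<sigma> * 2 * of_real pi * \<i> * of_real (\<Sum>j<length as. as ! j * real (m j))
                     - of_real \<sigma> * of_real pi * \<i> * of_real (\<Sum>j<length as. as ! j)"

definition shiftv :: "real list \<Rightarrow> (nat \<Rightarrow> int) \<Rightarrow> complex" where
  "shiftv bs e = \<i> * of_real (pi * (\<Sum>j<length bs. bs!j * of_int (e j)))"

definition sg :: "real \<Rightarrow> int" where "sg \<sigma> = (if \<sigma> = 1 then 1 else -1)"

lemma Fsol_tm: "Fsol \<sigma> as f u = of_real ((- \<sigma>) ^ length as) * infsum (\<lambda>m. f (tm \<sigma> as u m)) (PosTuples (length as))"
  unfolding Fsol_def tm_def ..

lemma PosTuples_pos: "g \<in> PosTuples k \<Longrightarrow> j < k \<Longrightarrow> g j \<ge> 1"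
  unfolding PosTuples_def by (auto simp: PiE_iff Suc_le_eq)

lemma phi_inj:
  assumes "\<forall>j<k. d j \<ge> -1"
  shows "inj_on (phi k d) (PosTuples k)"
proof (rule inj_onI)
  fix g g' assume g: "g \<in> PosTuples k" and g': "g' \<in> PosTuples k" and eq: "phi k d g = phi k d g'"
  show "g = g'"
  proof
    fix j show "g j = g' j"
    proof (cases "j < k")
      case True
      have "phi k d g j = phi k d g' j" using eq by simp
      hence "nat (2 * int (g j) - 1 + d j) = nat (2 * int (g' j) - 1 + d j)"
        using True by (simp add: phi_def)
      moreover have "g j \<ge> 1" "g' j \<ge> 1" using PosTuples_pos g g' True by auto
      moreover have "d j \<ge> -1" using assms True by auto
      ultimately have "2 * int (g j) - 1 + d j = 2 * int (g' j) - 1 + d j"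
        by (subst (asm) eq_nat_nat_iff) auto
      thus ?thesis by simp
    next
      case False
      thus ?thesis using g g' unfolding PosTuples_def by (auto simp: PiE_iff extensional_def)
    qed
  qed
qed

lemma phi_NN: "phi k d ` I \<subseteq> NN k"
  unfolding phi_def NN_def by (intro image_subsetI) (simp only: restrict_PiE_iff, simp)

lemma phi_real:
  assumes "g \<in> PosTuples k" "j < k" "d j \<ge> -1"
  shows "real (phi k d g j) = 2 * real (g j) - 1 + of_int (d j)"
proof -
  have "g j \<ge> 1" using PosTuples_pos assms by auto
  thus ?thesis using assms by (simp add: phi_def)
qed

lemma tm_eq:
  assumes s: "\<sigma> \<in> {1,-1}" and g: "g \<in> PosTuples (length bs)" and e: "\<forall>j<length bs. e j \<in> {-1,0,1}"
  shows "tm \<sigma> bs (u + shiftv bs e) g = Pt \<sigma> bs u (phi (length bs) (\<lambda>j. sg \<sigma> * e j) g)"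
proof -
  define k where "k = length bs"
  have d: "sg \<sigma> * e j \<ge> -1" if "j < k" for j using e that s unfolding k_def sg_def by auto
  have "(\<Sum>j<k. bs!j * real (phi k (\<lambda>j. sg \<sigma> * e j) g j))
      = (\<Sum>j<k. bs!j * (2 * real (g j) - 1 + of_int (sg \<sigma> * e j)))"
    using phi_real[OF g[folded k_def]] d by (intro sum.cong) auto
  also have "\<dots> = 2 * (\<Sum>j<k. bs!j * real (g j)) - (\<Sum>j<k. bs!j) + of_int (sg \<sigma>) * (\<Sum>j<k. bs!j * of_int (e j))"
    by (simp add: algebra_simps sum.distrib sum_subtractf sum_distrib_left)
  finally have E: "(\<Sum>j<k. bs!j * real (phi k (\<lambda>j. sg \<sigma> * e j) g j)) = \<dots>" .
  have ss: "\<sigma> * of_int (sg \<sigma>) = 1" using s unfolding sg_def by auto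
  show ?thesis
    unfolding tm_def Pt_def shiftv_def k_def[symmetric] E
    using ss by (simp add: algebra_simps complex_eq_iff)
qed



lemma GEN:
  fixes bs :: "real list" and f :: "complex \<Rightarrow> complex" and \<sigma> K L M A B :: real
  assumes s: "\<sigma> \<in> {1,-1}" and pos: "\<forall>b\<in>set bs. b > 0" and K: "K > 0" and L: "L > 0" and M: "M \<ge> 0"
    and fb: "\<forall>u\<in>Qreg \<sigma> K L. norm (f u) \<le> M * norm u powr (-A)"
    and A: "A > real (length bs)" and B: "B < A - real (length bs)"
  shows "\<exists>C. \<forall>u\<in>Qreg \<sigma> K L. \<forall>d. (\<forall>j<length bs. d j \<ge> -1) \<longrightarrow>
     (\<lambda>g. norm (f (Pt \<sigma> bs u (phi (length bs) d g)))) summable_on PosTuples (length bs)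
   \<and> (\<Sum>\<^sub>\<infinity>g\<in>PosTuples (length bs). norm (f (Pt \<sigma> bs u (phi (length bs) d g)))) \<le> C * norm u powr (-B)"
proof -
  obtain C where C: "\<forall>u\<in>Qreg \<sigma> K L.
     (\<lambda>n. norm (f (u + \<i> * of_real (\<sigma> * (pi * (\<Sum>j<length bs. bs!j * real (n j))))))) summable_on NN (length bs)
   \<and> (\<Sum>\<^sub>\<infinity>n\<in>NN (length bs). norm (f (u + \<i> * of_real (\<sigma> * (pi * (\<Sum>j<length bs. bs!j * real (n j)))))))
       \<le> C * norm u powr (-B)"
    using SUMB[OF assms] by blast
  show ?thesis
  proof (intro exI ballI allI impI conjI)
    fix u and d :: "nat \<Rightarrow> int" assume u: "u \<in> Qreg \<sigma> K L" and d: "\<forall>j<length bs. d j \<ge> -1"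
    have sm: "(\<lambda>n. norm (f (Pt \<sigma> bs u n))) summable_on NN (length bs)"
      and le: "(\<Sum>\<^sub>\<infinity>n\<in>NN (length bs). norm (f (Pt \<sigma> bs u n))) \<le> C * norm u powr (-B)"
      using C u unfolding Pt_def by auto
    note r = reidx[OF phi_inj[OF d] phi_NN sm]
    show "(\<lambda>g. norm (f (Pt \<sigma> bs u (phi (length bs) d g)))) summable_on PosTuples (length bs)"
      using r(1) .
    show "(\<Sum>\<^sub>\<infinity>g\<in>PosTuples (length bs). norm (f (Pt \<sigma> bs u (phi (length bs) d g)))) \<le> C * norm u powr (-B)"
      using r(2) le by linarith
  qed
qed

fun dT :: "real list \<Rightarrow> (real \<times> (nat \<Rightarrow> int)) list" where
  "dT [] = [(1, \<lambda>_. 0)]"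
| "dT (a # as) = map (\<lambda>(c,e). (c, case_nat 1 e)) (dT as) @ map (\<lambda>(c,e). (-c, case_nat (-1) e)) (dT as)"

lemma dT_e: "(c,e) \<in> set (dT bs) \<Longrightarrow> \<forall>j<length bs. e j \<in> {-1,1}"
proof (induction bs arbitrary: c e)
  case Nil thus ?case by simp
next
  case (Cons a as)
  from Cons.prems obtain c' e' where ce: "(c',e') \<in> set (dT as)" and
     "e = case_nat 1 e' \<or> e = case_nat (-1) e'" by auto
  with Cons.IH[OF ce] show ?case by (auto simp: less_Suc_eq_0_disj)
qed

lemma shiftv_Cons: "shiftv (a # as) (case_nat x e) = \<i> * of_real (a * pi * of_int x) + shiftv as e"
  unfolding shiftv_def length_Cons sum.lessThan_Suc_shift by (simp add: algebra_simps)

lemma sum_list_neg: "(\<Sum>x\<leftarrow>xs. - (f x :: 'a :: ab_group_add)) = - (\<Sum>x\<leftarrow>xs. f x)"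
  by (induction xs) auto

lemma DeltaL_expand: "DeltaL bs H w = (\<Sum>(c,e)\<leftarrow>dT bs. of_real c * H (w + shiftv bs e))"
proof (induction bs arbitrary: w)
  case Nil thus ?case by (simp add: shiftv_def)
next
  case (Cons a as)
  have "DeltaL (a # as) H w = DeltaL as H (w + \<i> * of_real (a * pi)) - DeltaL as H (w - \<i> * of_real (a * pi))"
    by (simp add: Delta_def)
  also have "\<dots> = (\<Sum>(c,e)\<leftarrow>dT as. of_real c * H (w + \<i> * of_real (a * pi) + shiftv as e))
      - (\<Sum>(c,e)\<leftarrow>dT as. of_real c * H (w - \<i> * of_real (a * pi) + shiftv as e))"
    using Cons.IH by simp
  also have "\<dots> = (\<Sum>(c,e)\<leftarrow>dT (a#as). of_real c * H (w + shiftv (a#as) e))"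
    by (simp add: shiftv_Cons o_def case_prod_unfold sum_list_neg algebra_simps)
  finally show ?case .
qed



lemma L1: "case_nat (n::nat) m = case_nat n' m' \<Longrightarrow> n = n' \<and> m = m'"
proof -
  assume eq: "case_nat (n::nat) m = case_nat n' m'"
  have "n = n'" using fun_cong[OF eq, of 0] by simp
  moreover have "m = m'"
  proof
    fix j show "m j = m' j" using fun_cong[OF eq, of "Suc j"] by simp
  qed
  ultimately show ?thesis by simp
qed
lemma psi_inj: "inj_on (\<lambda>(n,m). case_nat n m) ({0<..} \<times> PosTuples k)"
  unfolding inj_on_def using L1 by auto

lemma psi_mem:
  fixes n :: nat and m assumes n: "n \<in> {0<..}" and m: "m \<in> PosTuples k"
  shows "case_nat n m \<in> PosTuples (Suc k)"
      unfolding PosTuples_def PiE_iff extensional_def mem_Collect_eq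
    proof (intro conjI ballI allI impI)
      fix j assume "j \<in> {..<Suc k}" thus "case_nat n m j \<in> {0<..}"
        using n m unfolding PosTuples_def PiE_iff by (cases j) auto
    next
      fix j assume "j \<notin> {..<Suc k}" thus "case_nat n m j = undefined"
        using m unfolding PosTuples_def PiE_iff extensional_def by (cases j) auto
    qed

lemma psi_img: "(\<lambda>(n,m). case_nat n m) ` ({0<..} \<times> PosTuples k) = PosTuples (Suc k)"
proof
  show "(\<lambda>(n,m). case_nat n m) ` ({0<..} \<times> PosTuples k) \<subseteq> PosTuples (Suc k)"
    using psi_mem by auto
next
  show "PosTuples (Suc k) \<subseteq> (\<lambda>(n,m). case_nat n m) ` ({0<..} \<times> PosTuples k)"
  proof
    fix g assume g: "g \<in> PosTuples (Suc k)"
    have "g = case_nat (g 0) (\<lambda>i. g (Suc i))"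
    proof
      fix j show "g j = case_nat (g 0) (\<lambda>i. g (Suc i)) j" by (cases j) auto
    qed
    moreover have "g 0 \<in> {0<..}" using g unfolding PosTuples_def PiE_iff by auto
    moreover have "(\<lambda>i. g (Suc i)) \<in> PosTuples k"
      using g unfolding PosTuples_def PiE_iff extensional_def by auto
    ultimately show "g \<in> (\<lambda>(n,m). case_nat n m) ` ({0<..} \<times> PosTuples k)"
      by (intro image_eqI[of _ _ "(g 0, \<lambda>i. g (Suc i))"]) auto
  qed
qed

definition cc :: "real \<Rightarrow> real \<Rightarrow> nat \<Rightarrow> complex" where
  "cc \<sigma> a n = of_real \<sigma> * 2 * of_real pi * \<i> * of_real (a * real n) - of_real \<sigma> * of_real pi * \<i> * of_real a"

lemma tm_Cons: "tm \<sigma> (a#as) v (case_nat n m) = tm \<sigma> as (v + cc \<sigma> a n) m"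
  unfolding tm_def cc_def length_Cons sum.lessThan_Suc_shift by (simp add: algebra_simps)

lemma sum_list_infsum:
  fixes g :: "'x \<Rightarrow> 'i \<Rightarrow> complex"
  assumes "\<forall>x\<in>set xs. g x summable_on I"
  shows "(\<Sum>x\<leftarrow>xs. h x * infsum (g x) I) = infsum (\<lambda>n. \<Sum>x\<leftarrow>xs. h x * g x n) I
       \<and> (\<lambda>n. \<Sum>x\<leftarrow>xs. h x * g x n) summable_on I"
  using assms
proof (induction xs)
  case Nil thus ?case by simp
next
  case (Cons y ys)
  have gy: "g y summable_on I" using Cons.prems by simp
  have IH: "(\<Sum>x\<leftarrow>ys. h x * infsum (g x) I) = infsum (\<lambda>n. \<Sum>x\<leftarrow>ys. h x * g x n) I"
     "(\<lambda>n. \<Sum>x\<leftarrow>ys. h x * g x n) summable_on I" using Cons by auto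
  have gy': "(\<lambda>n. h y * g y n) summable_on I" using gy by (rule summable_on_cmult_right)
  show ?case
    using IH gy gy' by (simp add: infsum_add summable_on_add infsum_cmult_right')
qed

lemma telescope:
  fixes gg :: "nat \<Rightarrow> complex"
  assumes "gg summable_on UNIV"
  shows "(\<Sum>\<^sub>\<infinity>n\<in>{0<..}. gg (n - 1)) = gg 0 + (\<Sum>\<^sub>\<infinity>n\<in>{0<..}. gg n)"
    and "(\<lambda>n. gg (n - 1)) summable_on {0<..}" and "gg summable_on {0<..}"
proof -
  have img: "{0<..} = Suc ` UNIV" by (rule greaterThan_0)
  have "(\<Sum>\<^sub>\<infinity>n\<in>{0<..}. gg (n - 1)) = infsum gg UNIV"
    unfolding img by (subst infsum_reindex) (auto simp: o_def)
  also have "UNIV = insert 0 {0::nat<..}" by auto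
  also have "infsum gg (insert 0 {0<..}) = gg 0 + infsum gg {0<..}"
    using assms by (intro infsum_insert) (auto intro: summable_on_subset)
  finally show "(\<Sum>\<^sub>\<infinity>n\<in>{0<..}. gg (n - 1)) = gg 0 + (\<Sum>\<^sub>\<infinity>n\<in>{0<..}. gg n)" .
  show "gg summable_on {0<..}" using assms by (auto intro: summable_on_subset)
  show "(\<lambda>n. gg (n - 1)) summable_on {0<..}"
    unfolding img using assms by (subst summable_on_reindex) (auto simp: o_def)
qed



lemma decomp:
  fixes f :: "complex \<Rightarrow> complex" and \<sigma> K L M A :: real
  assumes s: "\<sigma> \<in> {1,-1}" and K: "K > 0" and L: "L > 0" and M: "M \<ge> 0"
    and fb: "\<forall>u\<in>Qreg \<sigma> K L. norm (f u) \<le> M * norm u powr (-A)"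
    and pos: "\<forall>b\<in>set (a#as). b > 0" and A1: "A > real (length (a#as))"
    and u: "u \<in> Qreg \<sigma> K L" and e': "\<forall>j<length (a#as). e' j \<in> {-1,0,1}"
  shows "(\<lambda>n. Fsol \<sigma> as f (u + shiftv (a#as) e' + cc \<sigma> a n)) summable_on {0<..}
    \<and> Fsol \<sigma> (a#as) f (u + shiftv (a#as) e') = of_real (-\<sigma>) * (\<Sum>\<^sub>\<infinity>n\<in>{0<..}. Fsol \<sigma> as f (u + shiftv (a#as) e' + cc \<sigma> a n))"
proof -
  define k where "k = length as"
  obtain C where C: "\<forall>u\<in>Qreg \<sigma> K L. \<forall>d. (\<forall>j<length (a#as). d j \<ge> -1) \<longrightarrow>
     (\<lambda>g. norm (f (Pt \<sigma> (a#as) u (phi (length (a#as)) d g)))) summable_on PosTuples (length (a#as))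
   \<and> (\<Sum>\<^sub>\<infinity>g\<in>PosTuples (length (a#as)). norm (f (Pt \<sigma> (a#as) u (phi (length (a#as)) d g)))) \<le> C * norm u powr (-0)"
    using GEN[OF s pos K L M fb A1, of 0] A1 by auto
  define v where "v = u + shiftv (a#as) e'"
  define d where "d j = sg \<sigma> * e' j" for j
  have d: "\<forall>j<length (a#as). d j \<ge> -1" using e' s by (auto simp: d_def sg_def)
  have sm1: "(\<lambda>g. f (tm \<sigma> (a#as) v g)) summable_on PosTuples (Suc k)"
  proof -
    have n1: "(\<lambda>g. norm (f (Pt \<sigma> (a#as) u (phi (length (a#as)) d g)))) summable_on PosTuples (length (a#as))"
      using C u d by blast
    have "tm \<sigma> (a#as) v g = Pt \<sigma> (a#as) u (phi (length (a#as)) d g)" if "g \<in> PosTuples (length (a#as))" for g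
      unfolding v_def d_def using tm_eq[OF s that e'] by simp
    hence "(\<lambda>g. norm (f (tm \<sigma> (a#as) v g))) summable_on PosTuples (length (a#as))"
      using n1 by (subst summable_on_cong) auto
    thus ?thesis unfolding k_def by (simp add: abs_summable_summable)
  qed
  have comp: "(\<lambda>g. f (tm \<sigma> (a#as) v g)) \<circ> (\<lambda>(n,m). case_nat n m) = (\<lambda>(n,m). f (tm \<sigma> as (v + cc \<sigma> a n) m))"
    by (auto simp: fun_eq_iff tm_Cons)
  have sm2: "(\<lambda>(n,m). f (tm \<sigma> as (v + cc \<sigma> a n) m)) summable_on {0<..} \<times> PosTuples k"
    using sm1 unfolding psi_img[symmetric, of k] summable_on_reindex[OF psi_inj] comp .
  have I1: "infsum (\<lambda>g. f (tm \<sigma> (a#as) v g)) (PosTuples (Suc k))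
       = (\<Sum>\<^sub>\<infinity>(n,m)\<in>{0<..} \<times> PosTuples k. f (tm \<sigma> as (v + cc \<sigma> a n) m))"
    unfolding psi_img[symmetric, of k] infsum_reindex[OF psi_inj] comp ..
  also have "\<dots> = (\<Sum>\<^sub>\<infinity>n\<in>{0<..}. infsum (\<lambda>m. f (tm \<sigma> as (v + cc \<sigma> a n) m)) (PosTuples k))"
    using infsum_Sigma'_banach[OF sm2] by simp
  finally have I2: "infsum (\<lambda>g. f (tm \<sigma> (a#as) v g)) (PosTuples (Suc k))
      = (\<Sum>\<^sub>\<infinity>n\<in>{0<..}. infsum (\<lambda>m. f (tm \<sigma> as (v + cc \<sigma> a n) m)) (PosTuples k))" .
  have sm3: "(\<lambda>n. infsum (\<lambda>m. f (tm \<sigma> as (v + cc \<sigma> a n) m)) (PosTuples k)) summable_on {0<..}"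
    using summable_on_Sigma_banach[OF sm2] by simp
  have Fs: "Fsol \<sigma> as f (v + cc \<sigma> a n) = of_real ((-\<sigma>)^k) * infsum (\<lambda>m. f (tm \<sigma> as (v + cc \<sigma> a n) m)) (PosTuples k)" for n
    unfolding Fsol_tm k_def ..
  have S: "(\<lambda>n. Fsol \<sigma> as f (v + cc \<sigma> a n)) summable_on {0<..}"
    unfolding Fs using sm3 by (rule summable_on_cmult_right)
  have "Fsol \<sigma> (a#as) f v = of_real ((-\<sigma>)^Suc k) * infsum (\<lambda>g. f (tm \<sigma> (a#as) v g)) (PosTuples (Suc k))"
    unfolding Fsol_tm k_def by simp
  also have "\<dots> = of_real (-\<sigma>) * (of_real ((-\<sigma>)^k) * (\<Sum>\<^sub>\<infinity>n\<in>{0<..}. infsum (\<lambda>m. f (tm \<sigma> as (v + cc \<sigma> a n) m)) (PosTuples k)))"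
    unfolding I2 by simp
  also have "\<dots> = of_real (-\<sigma>) * (\<Sum>\<^sub>\<infinity>n\<in>{0<..}. Fsol \<sigma> as f (v + cc \<sigma> a n))"
    unfolding Fs by (simp add: infsum_cmult_right')
  finally show ?thesis using S unfolding v_def by simp
qed



lemma gg_summable:
  fixes f :: "complex \<Rightarrow> complex" and \<sigma> K L M A a :: real
  assumes s: "\<sigma> \<in> {1,-1}" and K: "K > 0" and L: "L > 0" and M: "M \<ge> 0"
    and fb: "\<forall>u\<in>Qreg \<sigma> K L. norm (f u) \<le> M * norm u powr (-A)"
    and a: "a > 0" and A1: "A > 1" and u: "u \<in> Qreg \<sigma> K L"
  shows "(\<lambda>n. f (u + \<i> * of_real (\<sigma> * (pi * (a * real (2 * n)))))) summable_on UNIV"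
proof -
  have pos: "\<forall>b\<in>set [a]. b > 0" using a by simp
  have A1': "A > real (length [a])" using A1 by simp
  obtain C where C: "\<forall>u\<in>Qreg \<sigma> K L.
     (\<lambda>n. norm (f (u + \<i> * of_real (\<sigma> * (pi * (\<Sum>j<length [a]. [a]!j * real (n j))))))) summable_on NN (length [a])
   \<and> (\<Sum>\<^sub>\<infinity>n\<in>NN (length [a]). norm (f (u + \<i> * of_real (\<sigma> * (pi * (\<Sum>j<length [a]. [a]!j * real (n j)))))))
       \<le> C * norm u powr (-0)"
    using SUMB[OF s pos K L M fb A1', of 0] A1 by auto
  define F where "F n = f (u + \<i> * of_real (\<sigma> * (pi * (\<Sum>j<length [a]. [a]!j * real (n j)))))" for n :: "nat \<Rightarrow> nat"
  have sm: "(\<lambda>n. norm (F n)) summable_on NN 1" using C u unfolding F_def by simp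
  define \<phi> where "\<phi> n = restrict (\<lambda>_. 2 * n) {..<1::nat}" for n :: nat
  have inj: "inj_on \<phi> UNIV"
  proof (rule inj_onI)
    fix x y assume "x \<in> UNIV" "y \<in> UNIV" "\<phi> x = \<phi> y"
    hence "\<phi> x 0 = \<phi> y 0" by simp
    thus "x = y" unfolding \<phi>_def by simp
  qed
  have sub: "\<phi> ` UNIV \<subseteq> NN 1" unfolding \<phi>_def NN_def
    by (intro image_subsetI) (simp only: restrict_PiE_iff, simp)
  have "(\<lambda>n. norm (F (\<phi> n))) summable_on UNIV" using reidx(1)[OF inj sub sm] .
  moreover have "F (\<phi> n) = f (u + \<i> * of_real (\<sigma> * (pi * (a * real (2 * n)))))" for n
    unfolding F_def \<phi>_def by simp
  ultimately show ?thesis by (simp add: abs_summable_summable)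
qed

lemma main_ind:
  fixes f :: "complex \<Rightarrow> complex" and \<sigma> K L M A :: real
  assumes s: "\<sigma> \<in> {1,-1}" and K: "K > 0" and L: "L > 0" and M: "M \<ge> 0"
    and fb: "\<forall>u\<in>Qreg \<sigma> K L. norm (f u) \<le> M * norm u powr (-A)"
  shows "(\<forall>b\<in>set bs. b > 0) \<Longrightarrow> A > real (length bs) \<Longrightarrow> \<forall>u\<in>Qreg \<sigma> K L. DeltaL bs (Fsol \<sigma> bs f) u = f u"
proof (induction bs)
  case Nil
  show ?case by (simp add: Fsol_tm tm_def PosTuples_def)
next
  case (Cons a as)
  define k where "k = length as"
  have pos: "\<forall>b\<in>set (a#as). b > 0" using Cons.prems by simp
  have a: "a > 0" using pos by simp
  have A1: "A > real (length (a#as))" using Cons.prems by simp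
  have IH: "\<forall>u\<in>Qreg \<sigma> K L. DeltaL as (Fsol \<sigma> as f) u = f u" using Cons.IH Cons.prems by simp
  define F where "F = Fsol \<sigma> (a#as) f"
  define G where "G = Fsol \<sigma> as f"
  have KC3: "DeltaL as F (u + \<i> * of_real (a * pi * of_int \<epsilon>))
      = of_real (-\<sigma>) * (\<Sum>\<^sub>\<infinity>n\<in>{0<..}. f (u + \<i> * of_real (a * pi * of_int \<epsilon>) + cc \<sigma> a n))"
    if u: "u \<in> Qreg \<sigma> K L" and \<epsilon>: "\<epsilon> \<in> {-1,1}" for u \<epsilon>
  proof -
    define w where "w = u + \<i> * of_real (a * pi * of_int \<epsilon>)"
    have wn: "w + cc \<sigma> a n \<in> Qreg \<sigma> K L" if n: "n \<in> {0<..}" for n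
    proof -
      have e1: "w + cc \<sigma> a n = u + \<i> * of_real (\<sigma> * (pi * a * (2 * real n - 1 + \<sigma> * of_int \<epsilon>)))"
        unfolding w_def cc_def using s by (auto simp: complex_eq_iff algebra_simps)
      have "\<sigma> * of_int \<epsilon> \<ge> -1" using s \<epsilon> by auto
      moreover have "real n \<ge> 1" using n by auto
      ultimately have "pi * a * (2 * real n - 1 + \<sigma> * of_int \<epsilon>) \<ge> 0" using a by auto
      thus ?thesis unfolding e1 using Q_shift[OF s u] by blast
    qed
    have dec: "(\<lambda>n. G (w + shiftv as e + cc \<sigma> a n)) summable_on {0<..}
        \<and> F (w + shiftv as e) = of_real (-\<sigma>) * (\<Sum>\<^sub>\<infinity>n\<in>{0<..}. G (w + shiftv as e + cc \<sigma> a n))"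
      if ce: "(c, e) \<in> set (dT as)" for c e
    proof -
      have ee: "\<forall>j<length as. e j \<in> {-1,1}" using dT_e[OF ce] .
      have e': "\<forall>j<length (a#as). case_nat \<epsilon> e j \<in> {-1,0,1}"
        using ee \<epsilon> by (auto simp: less_Suc_eq_0_disj)
      have vw: "u + shiftv (a#as) (case_nat \<epsilon> e) = w + shiftv as e"
        unfolding w_def shiftv_Cons by (simp add: algebra_simps)
      show ?thesis
        using decomp[OF s K L M fb pos A1 u e'] unfolding vw F_def G_def .
    qed
    have "DeltaL as F w = (\<Sum>(c,e)\<leftarrow>dT as. of_real c * F (w + shiftv as e))"
      by (rule DeltaL_expand)
    also have "\<dots> = (\<Sum>x\<leftarrow>dT as. (of_real (fst x) * of_real (-\<sigma>)) * infsum (\<lambda>n. G (w + shiftv as (snd x) + cc \<sigma> a n)) {0<..})"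
      using dec by (intro arg_cong[where f=sum_list] map_cong) (auto simp: case_prod_unfold)
    also have "\<dots> = infsum (\<lambda>n. \<Sum>x\<leftarrow>dT as. (of_real (fst x) * of_real (-\<sigma>)) * G (w + shiftv as (snd x) + cc \<sigma> a n)) {0<..}"
    proof -
      have sx: "\<forall>x\<in>set (dT as). (\<lambda>n. G (w + shiftv as (snd x) + cc \<sigma> a n)) summable_on {0<..}"
        using dec by (metis prod.collapse)
      show ?thesis by (rule conjunct1[OF sum_list_infsum[OF sx]])
    qed
    also have "\<dots> = infsum (\<lambda>n. of_real (-\<sigma>) * DeltaL as G (w + cc \<sigma> a n)) {0<..}"
    proof (rule infsum_cong)
      fix n :: nat assume "n \<in> {0<..}"
      have "DeltaL as G (w + cc \<sigma> a n) = (\<Sum>(c,e)\<leftarrow>dT as. of_real c * G (w + cc \<sigma> a n + shiftv as e))"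
        by (rule DeltaL_expand)
      thus "(\<Sum>x\<leftarrow>dT as. (of_real (fst x) * of_real (-\<sigma>)) * G (w + shiftv as (snd x) + cc \<sigma> a n))
          = of_real (-\<sigma>) * DeltaL as G (w + cc \<sigma> a n)"
        by (simp add: case_prod_unfold sum_list_const_mult[symmetric] algebra_simps)
    qed
    also have "\<dots> = infsum (\<lambda>n. of_real (-\<sigma>) * f (w + cc \<sigma> a n)) {0<..}"
      using IH wn unfolding G_def by (intro infsum_cong) auto
    also have "\<dots> = of_real (-\<sigma>) * (\<Sum>\<^sub>\<infinity>n\<in>{0<..}. f (w + cc \<sigma> a n))"
      by (rule infsum_cmult_right')
    finally show ?thesis unfolding w_def .
  qed
  show ?case
  proof
    fix u assume u: "u \<in> Qreg \<sigma> K L"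
    define gg where "gg n = f (u + \<i> * of_real (\<sigma> * (pi * (a * real (2 * n)))))" for n
    have ggs: "gg summable_on UNIV" unfolding gg_def
      using gg_summable[OF s K L M fb a _ u] A1 by simp
    note T = telescope[OF ggs]
    have g0: "gg 0 = f u" unfolding gg_def by simp
    have p: "u + \<i> * of_real (a * pi) = u + \<i> * of_real (a * pi * of_int (1::int))" by simp
    have m: "u - \<i> * of_real (a * pi) = u + \<i> * of_real (a * pi * of_int (-1::int))" by simp
    have "DeltaL (a#as) F u = DeltaL as F (u + \<i> * of_real (a * pi)) - DeltaL as F (u - \<i> * of_real (a * pi))"
      by (simp add: Delta_def)
    also have "\<dots> = of_real (-\<sigma>) * ((\<Sum>\<^sub>\<infinity>n\<in>{0<..}. f (u + \<i> * of_real (a * pi * of_int (1::int)) + cc \<sigma> a n))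
         - (\<Sum>\<^sub>\<infinity>n\<in>{0<..}. f (u + \<i> * of_real (a * pi * of_int (-1::int)) + cc \<sigma> a n)))"
      unfolding p m using KC3[OF u, of 1] KC3[OF u, of "-1"] by (simp add: algebra_simps)
    also have "\<dots> = f u"
    proof (cases "\<sigma> = 1")
      case True
      have e1: "(\<Sum>\<^sub>\<infinity>n\<in>{0<..}. f (u + \<i> * of_real (a * pi * of_int (1::int)) + cc \<sigma> a n)) = (\<Sum>\<^sub>\<infinity>n\<in>{0<..}. gg n)"
        unfolding gg_def cc_def True by (intro infsum_cong) (simp add: complex_eq_iff algebra_simps)
      have e2: "(\<Sum>\<^sub>\<infinity>n\<in>{0<..}. f (u + \<i> * of_real (a * pi * of_int (-1::int)) + cc \<sigma> a n)) = (\<Sum>\<^sub>\<infinity>n\<in>{0<..}. gg (n - 1))"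
        unfolding gg_def cc_def True by (intro infsum_cong) (auto simp: complex_eq_iff algebra_simps of_nat_diff)
      show ?thesis unfolding e1 e2 T(1) g0 using True by simp
    next
      case False
      hence s1: "\<sigma> = -1" using s by simp
      have e1: "(\<Sum>\<^sub>\<infinity>n\<in>{0<..}. f (u + \<i> * of_real (a * pi * of_int (1::int)) + cc \<sigma> a n)) = (\<Sum>\<^sub>\<infinity>n\<in>{0<..}. gg (n - 1))"
        unfolding gg_def cc_def s1 by (intro infsum_cong) (auto simp: complex_eq_iff algebra_simps of_nat_diff)
      have e2: "(\<Sum>\<^sub>\<infinity>n\<in>{0<..}. f (u + \<i> * of_real (a * pi * of_int (-1::int)) + cc \<sigma> a n)) = (\<Sum>\<^sub>\<infinity>n\<in>{0<..}. gg n)"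
        unfolding gg_def cc_def s1 by (intro infsum_cong) (simp add: complex_eq_iff algebra_simps)
      show ?thesis unfolding e1 e2 T(1) g0 using s1 by simp
    qed
    finally show "DeltaL (a#as) (Fsol \<sigma> (a#as) f) u = f u" unfolding F_def .
  qed
qed



theorem lemma14:
  fixes as :: "real list" and K L M A \<sigma> :: real and f :: "complex \<Rightarrow> complex"
  assumes "\<sigma> \<in> {1, -1}"
    and "\<forall>a \<in> set as. a > 0"
    and "K > 0" and "L > 0"
    and "f holomorphic_on Qreg \<sigma> K L"
    and "\<forall>u \<in> Qreg \<sigma> K L. norm (f u) \<le> M * norm u powr (- A)"
    and "A > real (length as)"
  shows "(\<forall>u \<in> Qreg \<sigma> K L.
            (\<lambda>m. f (u + of_real \<sigma> * 2 * of_real pi * \<i> * of_real (\<Sum>j<length as. as ! j * real (m j))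
                     - of_real \<sigma> * of_real pi * \<i> * of_real (\<Sum>j<length as. as ! j)))
            summable_on PosTuples (length as))
       \<and> (\<forall>u \<in> Qreg \<sigma> K L. DeltaL as (Fsol \<sigma> as f) u = f u)
       \<and> (\<forall>B. B < A - real (length as) \<longrightarrow>
            (\<exists>C. \<forall>u \<in> Qreg \<sigma> K L. norm (Fsol \<sigma> as f u) \<le> C * norm u powr (- B)))"
proof -
  note s = assms(1) and pos = assms(2) and K = assms(3) and L = assms(4) and A = assms(7)
  define M' where "M' = max M 0"
  have M': "M' \<ge> 0" unfolding M'_def by simp
  have fb: "\<forall>u \<in> Qreg \<sigma> K L. norm (f u) \<le> M' * norm u powr (- A)"
  proof
    fix u assume "u \<in> Qreg \<sigma> K L"
    hence "norm (f u) \<le> M * norm u powr (- A)" using assms(6) by blast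
    also have "\<dots> \<le> M' * norm u powr (- A)" unfolding M'_def by (intro mult_right_mono) auto
    finally show "norm (f u) \<le> M' * norm u powr (- A)" .
  qed
  define k where "k = length as"
  have d0: "\<forall>j<length as. (\<lambda>j. sg \<sigma> * (0::int)) j \<ge> -1" by simp
  have e0: "\<forall>j<length as. (\<lambda>_. 0::int) j \<in> {-1,0,1}" by simp
  have sh0: "u + shiftv as (\<lambda>_. 0) = u" for u unfolding shiftv_def by simp
  have tm0: "tm \<sigma> as u g = Pt \<sigma> as u (phi (length as) (\<lambda>j. sg \<sigma> * 0) g)" if "g \<in> PosTuples (length as)" for u g
    using tm_eq[OF s that e0, of u] unfolding sh0 .
  have z: "(\<lambda>j. sg \<sigma> * (0::int)) = (\<lambda>_. 0)" by simp
  have key: "\<exists>C. \<forall>u\<in>Qreg \<sigma> K L. (\<lambda>m. norm (f (tm \<sigma> as u m))) summable_on PosTuples (length as)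
        \<and> (\<Sum>\<^sub>\<infinity>m\<in>PosTuples (length as). norm (f (tm \<sigma> as u m))) \<le> C * norm u powr (-B)"
    if B: "B < A - real (length as)" for B
  proof -
    obtain C where C: "\<forall>u\<in>Qreg \<sigma> K L. \<forall>d. (\<forall>j<length as. d j \<ge> -1) \<longrightarrow>
     (\<lambda>g. norm (f (Pt \<sigma> as u (phi (length as) d g)))) summable_on PosTuples (length as)
   \<and> (\<Sum>\<^sub>\<infinity>g\<in>PosTuples (length as). norm (f (Pt \<sigma> as u (phi (length as) d g)))) \<le> C * norm u powr (-B)"
      using GEN[OF s pos K L M' fb A B] by blast
    show ?thesis
    proof (intro exI ballI)
      fix u assume u: "u \<in> Qreg \<sigma> K L"
      have c: "(\<lambda>g. norm (f (Pt \<sigma> as u (phi (length as) (\<lambda>j. sg \<sigma> * 0) g)))) summable_on PosTuples (length as)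
   \<and> (\<Sum>\<^sub>\<infinity>g\<in>PosTuples (length as). norm (f (Pt \<sigma> as u (phi (length as) (\<lambda>j. sg \<sigma> * 0) g)))) \<le> C * norm u powr (-B)"
      proof -
        have "\<forall>d. (\<forall>j<length as. d j \<ge> -1) \<longrightarrow>
     (\<lambda>g. norm (f (Pt \<sigma> as u (phi (length as) d g)))) summable_on PosTuples (length as)
   \<and> (\<Sum>\<^sub>\<infinity>g\<in>PosTuples (length as). norm (f (Pt \<sigma> as u (phi (length as) d g)))) \<le> C * norm u powr (-B)"
          using C u by blast
        hence "(\<forall>j<length as. (\<lambda>_. 0::int) j \<ge> -1) \<longrightarrow>
     (\<lambda>g. norm (f (Pt \<sigma> as u (phi (length as) (\<lambda>_. 0) g)))) summable_on PosTuples (length as)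
   \<and> (\<Sum>\<^sub>\<infinity>g\<in>PosTuples (length as). norm (f (Pt \<sigma> as u (phi (length as) (\<lambda>_. 0) g)))) \<le> C * norm u powr (-B)"
          by (rule spec)
        thus ?thesis unfolding z by simp
      qed
      have "(\<lambda>m. norm (f (tm \<sigma> as u m))) summable_on PosTuples (length as)"
        using c tm0 by (subst summable_on_cong) auto
      moreover have "(\<Sum>\<^sub>\<infinity>m\<in>PosTuples (length as). norm (f (tm \<sigma> as u m))) \<le> C * norm u powr (-B)"
        using c tm0 by (subst infsum_cong) auto
      ultimately show "(\<lambda>m. norm (f (tm \<sigma> as u m))) summable_on PosTuples (length as)
        \<and> (\<Sum>\<^sub>\<infinity>m\<in>PosTuples (length as). norm (f (tm \<sigma> as u m))) \<le> C * norm u powr (-B)" by blast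
    qed
  qed
  have P1: "\<forall>u \<in> Qreg \<sigma> K L. (\<lambda>m. f (tm \<sigma> as u m)) summable_on PosTuples (length as)"
  proof
    fix u assume u: "u \<in> Qreg \<sigma> K L"
    obtain C where "\<forall>u\<in>Qreg \<sigma> K L. (\<lambda>m. norm (f (tm \<sigma> as u m))) summable_on PosTuples (length as)
        \<and> (\<Sum>\<^sub>\<infinity>m\<in>PosTuples (length as). norm (f (tm \<sigma> as u m))) \<le> C * norm u powr (-((A - real (length as))/2))"
      using key[of "(A - real (length as))/2"] A by auto
    thus "(\<lambda>m. f (tm \<sigma> as u m)) summable_on PosTuples (length as)"
      using u by (auto intro: abs_summable_summable)
  qed
  have P2: "\<forall>u \<in> Qreg \<sigma> K L. DeltaL as (Fsol \<sigma> as f) u = f u"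
    using main_ind[OF s K L M' fb pos A] .
  have P3: "\<exists>C. \<forall>u \<in> Qreg \<sigma> K L. norm (Fsol \<sigma> as f u) \<le> C * norm u powr (- B)"
    if B: "B < A - real (length as)" for B
  proof -
    obtain C where C: "\<forall>u\<in>Qreg \<sigma> K L. (\<lambda>m. norm (f (tm \<sigma> as u m))) summable_on PosTuples (length as)
        \<and> (\<Sum>\<^sub>\<infinity>m\<in>PosTuples (length as). norm (f (tm \<sigma> as u m))) \<le> C * norm u powr (-B)"
      using key[OF B] by blast
    show ?thesis
    proof (intro exI ballI)
      fix u assume u: "u \<in> Qreg \<sigma> K L"
      have ns: "norm (of_real ((- \<sigma>) ^ length as) :: complex) = 1" using s by (auto simp: norm_power)
      have "norm (Fsol \<sigma> as f u) = norm (infsum (\<lambda>m. f (tm \<sigma> as u m)) (PosTuples (length as)))"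
        unfolding Fsol_tm norm_mult ns by simp
      also have "\<dots> \<le> (\<Sum>\<^sub>\<infinity>m\<in>PosTuples (length as). norm (f (tm \<sigma> as u m)))"
        using C u by (intro norm_infsum_bound) auto
      also have "\<dots> \<le> C * norm u powr (-B)" using C u by auto
      finally show "norm (Fsol \<sigma> as f u) \<le> C * norm u powr (- B)" .
    qed
  qed
  show ?thesis using P1 P2 P3 unfolding tm_def by blast
qed

end
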